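(* Let $G$ be a finite simple directed graph. The edge set of $\mathcal TG$ can be partitioned into edge-disjoint simple cycles of $\mathcal TG$, each of which is mapped by $p$ bijectively onto a simple cycle of $G$. Moreover, if $C$ is a simple cycle of $G$ with vertex set $W$, the number of cycles of this partition lying above $C$ (i.e. mapped by $p$ onto $C$) equals the number of forests of $G$ rooted in $W$.
   Context: A spanning tree of a directed graph $G=(V,E)$ is a subgraph on all vertices with no cycle, one vertex (root) of outdegree $0$ and all others of outdegree $1$. For $W\subseteq V$ nonempty, a forest rooted in $W$ is a subgraph on all vertices, with no cycle, in which vertices of $W$ have outdegree $0$ and all others outdegree $1$. The tree graph $\mathcal TG$ has the spanning trees of $G$ as vertices; for a tree $\mathbf a$ rooted at $r$ and an edge $e$ with source $r$, let $\mathbf b$ be obtained by adding $e$ to $\mathbf a$ and deleting the edge of $\mathbf a$ going out of the target $t(e)$; then $\mathbf a\to\mathbf b$ is an edge of $\mathcal TG$. The projection $p$ maps each spanning tree to its root and each edge $\mathbf a\to\mathbf b$ of $\mathcal TG$ to the edge $e$ of $G$ used to construct it. A simple cycle is a closed path traversing each of its vertices and edges exactly once. *)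

theory Defs
  imports Main
begin

text \<open>A finite simple directed graph: finite vertex set V, edge relation E on V, no loops
  (multiple edges are impossible since E is a set of ordered pairs). An edge (u,v) has source u
  and target v.\<close>
definition simple_digraph :: "'a set \<Rightarrow> ('a \<times> 'a) set \<Rightarrow> bool" where
  "simple_digraph V E \<longleftrightarrow> finite V \<and> E \<subseteq> V \<times> V \<and> (\<forall>v. (v, v) \<notin> E)"

definition rooted_forest :: "'a set \<Rightarrow> ('a \<times> 'a) set \<Rightarrow> 'a set \<Rightarrow> ('a \<times> 'a) set \<Rightarrow> bool" where
  "rooted_forest V E W F \<longleftrightarrow> W \<noteq> {} \<and> W \<subseteq> V \<and> F \<subseteq> E \<and> acyclic F \<and>
     (\<forall>v\<in>V. card {e\<in>F. fst e = v} = (if v \<in> W then 0 else 1))"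

definition spanning_tree :: "'a set \<Rightarrow> ('a \<times> 'a) set \<Rightarrow> 'a \<Rightarrow> ('a \<times> 'a) set \<Rightarrow> bool" where
  "spanning_tree V E r T \<longleftrightarrow> r \<in> V \<and> rooted_forest V E {r} T"

text \<open>Edges of the tree graph TG, represented as triples (a, e, b): source tree a, the edge e of G
  used to construct it, target tree b.\<close>
definition tree_graph_edges ::
  "'a set \<Rightarrow> ('a \<times> 'a) set \<Rightarrow> (('a \<times> 'a) set \<times> ('a \<times> 'a) \<times> ('a \<times> 'a) set) set" where
  "tree_graph_edges V E = {(a, e, b). \<exists>r. spanning_tree V E r a \<and> e \<in> E \<and> fst e = r \<and>
      b = insert e (a - {d \<in> a. fst d = snd e})}"

abbreviation tg_src :: "('v \<times> 'e \<times> 'v) \<Rightarrow> 'v" where "tg_src x \<equiv> fst x"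
abbreviation tg_tgt :: "('v \<times> 'e \<times> 'v) \<Rightarrow> 'v" where "tg_tgt x \<equiv> snd (snd x)"

definition proj :: "('v \<times> 'e \<times> 'v) \<Rightarrow> 'e" where "proj x = fst (snd x)"

definition simple_cycle :: "('e \<Rightarrow> 'v) \<Rightarrow> ('e \<Rightarrow> 'v) \<Rightarrow> 'e set \<Rightarrow> 'e set \<Rightarrow> bool" where
  "simple_cycle src tgt Es C \<longleftrightarrow> (\<exists>es. es \<noteq> [] \<and> set es = C \<and> C \<subseteq> Es \<and>
      distinct es \<and> distinct (map src es) \<and>
      (\<forall>i<length es. tgt (es ! i) = src (es ! ((i + 1) mod length es))))"

end

theory Submission
  imports Defs
begin

definition cyc :: "('a \<times> 'a) list \<Rightarrow> bool" where
  "cyc es \<longleftrightarrow> (\<forall>i<length es. snd (es!i) = fst (es!((i+1) mod length es)))"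

lemma cyc_rotate:
  assumes "cyc es" shows "cyc (rotate m es)"
  unfolding cyc_def
proof (intro allI impI)
  fix i assume i: "i < length (rotate m es)"
  let ?n = "length es"
  have n: "?n > 0" using i by (cases es) auto
  have i': "i < ?n" using i by simp
  have "snd (rotate m es ! i) = snd (es ! ((m+i) mod ?n))" using i' nth_rotate by metis
  also have "\<dots> = fst (es ! (((m+i) mod ?n + 1) mod ?n))"
    using assms n unfolding cyc_def by simp
  also have "((m+i) mod ?n + 1) mod ?n = (m + (i+1) mod ?n) mod ?n"
    by (simp add: mod_simps)
  also have "fst (es ! ((m + (i+1) mod ?n) mod ?n)) = fst (rotate m es ! ((i+1) mod length (rotate m es)))"
    using nth_rotate[of "(i+1) mod ?n" es m] n by simp
  finally show "snd (rotate m es ! i) = fst (rotate m es ! ((i + 1) mod length (rotate m es)))" .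
qed

lemma sc_last:
  assumes "simple_cycle fst snd E C" "e \<in> C"
  shows "\<exists>es. es \<noteq> [] \<and> set es = C \<and> C \<subseteq> E \<and> distinct (map fst es) \<and> cyc es \<and> last es = e"
proof -
  obtain es where es: "es \<noteq> []" "set es = C" "C \<subseteq> E" "distinct (map fst es)" "cyc es"
    using assms(1) unfolding simple_cycle_def cyc_def by auto
  obtain k where k: "k < length es" "es ! k = e" using assms(2) es(2) by (metis in_set_conv_nth)
  let ?r = "rotate (Suc k) es"
  have "last ?r = ?r ! (length es - 1)" using es(1) by (simp add: last_conv_nth)
  also have "\<dots> = es ! ((Suc k + (length es - 1)) mod length es)"
    using es(1) nth_rotate[of "length es - 1" es "Suc k"] by simp
  also have "(Suc k + (length es - 1)) mod length es = k" using k(1) es(1)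
    by (metis Suc_pred' add_Suc add_Suc_right length_greater_0_conv mod_add_self2 mod_less)
  finally have "last ?r = e" using k by simp
  moreover have "distinct (map fst ?r)" using es(4) by (metis rotate_map distinct_rotate)
  moreover have "cyc ?r" by (rule cyc_rotate[OF es(5)])
  moreover have "?r \<noteq> []" "set ?r = C" using es by auto
  ultimately show ?thesis using es(3) by blast
qed

lemma rank_acyclic:
  assumes "\<forall>(x,y)\<in>R. f x < (f y::nat)" shows "acyclic R"
proof -
  have "(x,y)\<in>R\<^sup>+ \<Longrightarrow> f x < f y" for x y
    by (induction rule: trancl_induct) (use assms in auto)
  then show ?thesis by (auto simp: acyclic_def)
qed

lemma cycle_props:
  assumes G: "simple_digraph V E" and C: "simple_cycle fst snd E C"
  shows "finite C" "C \<noteq> {}" "C \<subseteq> E" "inj_on fst C"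
    "\<forall>d\<in>C. \<exists>d'\<in>C. fst d' = snd d" "\<forall>d\<in>C. fst d \<noteq> snd d"
proof -
  obtain es where es: "es \<noteq> []" "set es = C" "C \<subseteq> E" "distinct (map fst es)" "cyc es"
    using C unfolding simple_cycle_def cyc_def by auto
  show "finite C" "C \<noteq> {}" "C \<subseteq> E" using es by auto
  show "inj_on fst C" using es(2,4) distinct_map by blast
  show "\<forall>d\<in>C. \<exists>d'\<in>C. fst d' = snd d"
  proof
    fix d assume "d \<in> C"
    then obtain i where i: "i < length es" "es!i = d" using es(2) by (metis in_set_conv_nth)
    have "snd d = fst (es!((i+1) mod length es))" using es(5) i unfolding cyc_def by auto
    moreover have "es!((i+1) mod length es) \<in> C" using es(1,2) by auto
    ultimately show "\<exists>d'\<in>C. fst d' = snd d" by metis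
  qed
  show "\<forall>d\<in>C. fst d \<noteq> snd d" using G es(3) unfolding simple_digraph_def
    by (metis prod.collapse subsetD)
qed

lemma cycle_acyc:
  assumes C: "simple_cycle fst snd E C" and e: "e \<in> C"
  shows "acyclic (C - {e})" "\<forall>v\<in>fst`C. (snd e, v) \<in> (C-{e})\<^sup>*"
proof -
  obtain es where es: "es \<noteq> []" "set es = C" "distinct (map fst es)" "cyc es" "last es = e"
    using sc_last[OF C e] by blast
  define n where "n = length es"
  have n: "n > 0" using es(1) n_def by auto
  have en: "es!(n-1) = e" using es(1,5) n_def by (simp add: last_conv_nth)
  have dist: "distinct es" using es(3) distinct_map by blast
  define f where "f v = (LEAST j. fst (es!j) = v)" for v
  have fj: "f (fst (es!j)) = j" if "j < n" for j
    unfolding f_def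
  proof (rule Least_equality)
    fix j' assume "fst (es!j') = fst (es!j)"
    show "j \<le> j'"
    proof (cases "j' < n")
      case True
      then have "map fst es ! j' = map fst es ! j" using that `fst (es!j') = fst (es!j)` n_def by simp
      then show ?thesis using nth_eq_iff_index_eq[OF es(3)] True that n_def by auto
    qed (use that in auto)
  qed simp
  have nxt: "snd (es!j) = fst (es!(j+1))" if "j+1 < n" for j
    using es(4) that n_def unfolding cyc_def by auto
  have notlast: "es!j \<noteq> e" if "j+1 < n" for j
    using en nth_eq_iff_index_eq[OF dist] that n_def by fastforce
  have memC: "d \<in> C - {e} \<Longrightarrow> \<exists>j. j+1 < n \<and> d = es!j" for d
  proof -
    assume "d \<in> C - {e}"
    then obtain j where "j < n" "es!j = d" "d \<noteq> e" using es(2) n_def by (metis DiffE in_set_conv_nth singletonI)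
    then have "j \<noteq> n - 1" using en by auto
    then show ?thesis using `j<n` `es!j = d` by (intro exI[of _ j]) auto
  qed
  have fl: "f a < f b" if ab: "(a,b) \<in> C - {e}" for a b
  proof -
    from ab obtain j where j: "j+1 < n" "(a,b) = es!j" using memC by blast
    have "a = fst (es!j)" using j(2) by (metis fst_conv)
    moreover have "b = fst (es!(j+1))" using nxt[OF j(1)] j(2) by (metis snd_conv)
    ultimately show "f a < f b" using fj j(1) by simp
  qed
  show "acyclic (C - {e})" by (rule rank_acyclic[of _ f]) (use fl in blast)
  have se: "snd e = fst (es!0)" using es(4) en n n_def unfolding cyc_def
    by (metis Suc_eq_plus1 Suc_pred' diff_less less_one mod_self)
  have reach: "(snd e, fst (es!j)) \<in> (C-{e})\<^sup>*" if "j < n" for j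
    using that
  proof (induction j)
    case 0 then show ?case using se by simp
  next
    case (Suc j)
    have "es!j \<in> C - {e}" using Suc(2) notlast[of j] es(2) n_def by auto
    then have "(fst (es!j), fst (es!(Suc j))) \<in> C - {e}" using nxt[of j] Suc(2)
      by (metis Suc_eq_plus1 prod.collapse)
    then show ?case using Suc by (meson Suc_lessD rtrancl.rtrancl_into_rtrancl)
  qed
  show "\<forall>v\<in>fst`C. (snd e, v) \<in> (C-{e})\<^sup>*"
    using reach es(2) n_def by (auto simp: in_set_conv_nth) (metis fst_conv)
qed

lemma forest_props:
  assumes G: "simple_digraph V E" and F: "rooted_forest V E W F"
  shows "finite F" "F \<subseteq> E" "acyclic F" "\<forall>d\<in>F. fst d \<notin> W" "W \<subseteq> V" "W \<noteq> {}"
    "\<forall>v\<in>V. card {d\<in>F. fst d = v} = (if v \<in> W then 0 else 1)"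
proof -
  have fE: "finite E" using G unfolding simple_digraph_def by (meson finite_SigmaI finite_subset)
  show FE: "F \<subseteq> E" "acyclic F" "W \<subseteq> V" "W \<noteq> {}"
    "\<forall>v\<in>V. card {d\<in>F. fst d = v} = (if v \<in> W then 0 else 1)"
    using F unfolding rooted_forest_def by auto
  show fF: "finite F" using FE(1) fE finite_subset by blast
  show "\<forall>d\<in>F. fst d \<notin> W"
  proof (intro ballI notI)
    fix d assume d: "d \<in> F" "fst d \<in> W"
    have "fst d \<in> V" using d FE(3) by auto
    then have "card {x\<in>F. fst x = fst d} = 0" using FE(5) d(2) by auto
    moreover have "finite {x\<in>F. fst x = fst d}" using fF by auto
    moreover have "d \<in> {x\<in>F. fst x = fst d}" using d by auto
    ultimately show False by (metis (no_types, lifting) card_0_eq empty_iff)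
  qed
qed

definition tg :: "('a \<times> 'a) set \<Rightarrow> 'a \<times> 'a \<Rightarrow> ('a \<times> 'a) set \<times> ('a \<times> 'a) \<times> ('a \<times> 'a) set" where
  "tg a e = (a, e, insert e (a - {d \<in> a. fst d = snd e}))"

lemma next_tree:
  assumes G: "simple_digraph V E" and C: "simple_cycle fst snd E C"
    and F: "rooted_forest V E (fst`C) F" and e: "e \<in> C" and e': "e' \<in> C" "fst e' = snd e"
  shows "insert e ((F \<union> C - {e}) - {d \<in> F \<union> C - {e}. fst d = snd e}) = F \<union> C - {e'}"
proof -
  note cp = cycle_props[OF G C] and fp = forest_props[OF G F]
  have ne: "e' \<noteq> e" using cp(6) e e' by auto
  have "{d \<in> F \<union> C - {e}. fst d = snd e} = {e'}"
  proof -
    have "d = e'" if "d \<in> F \<union> C - {e}" "fst d = snd e" for d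
    proof -
      have "d \<notin> F" using fp(4) that(2) e' by (metis image_eqI)
      then have "d \<in> C" using that by auto
      then show ?thesis using cp(4) e' that(2) by (metis inj_onD)
    qed
    then show ?thesis using e' ne by auto
  qed
  then show ?thesis using e ne by auto
qed

lemma tree_of:
  assumes G: "simple_digraph V E" and C: "simple_cycle fst snd E C"
    and F: "rooted_forest V E (fst`C) F" and e: "e \<in> C"
  shows "spanning_tree V E (fst e) (F \<union> C - {e})"
proof -
  note cp = cycle_props[OF G C] and fp = forest_props[OF G F] and ca = cycle_acyc[OF C e]
  let ?W = "fst`C"
  let ?T = "F \<union> C - {e}"
  have EV: "E \<subseteq> V \<times> V" using G unfolding simple_digraph_def by auto
  have rV: "fst e \<in> V" using e cp(3) EV by auto
  have wf1: "wf ((C-{e})\<inverse>)" using ca(1) cp(1) by (intro finite_acyclic_wf_converse) auto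
  have wf2: "wf (F\<inverse>)" using fp(1,3) by (intro finite_acyclic_wf_converse) auto
  have rng: "Range (C - {e}) \<subseteq> ?W" using cp(5) by force
  have "Domain ((C-{e})\<inverse>) \<inter> Range (F\<inverse>) = {}" using rng fp(4) by force
  then have "wf ((C-{e})\<inverse> \<union> F\<inverse>)" using wf1 wf2 by (rule wf_Un[rotated 2])
  then have "acyclic (F \<union> (C - {e}))"
    by (metis acyclic_converse converse_Un sup_commute wf_acyclic)
  then have acT: "acyclic ?T" by (rule acyclic_subset) auto
  have deg: "card {d\<in>?T. fst d = v} = (if v \<in> {fst e} then 0 else 1)" if v: "v \<in> V" for v
  proof (cases "v \<in> ?W")
    case False
    then have "{d\<in>?T. fst d = v} = {d\<in>F. fst d = v}" using fp(4) e by (auto intro: rev_image_eqI)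
    moreover have "v \<noteq> fst e" using False e by auto
    ultimately show ?thesis using fp(7) v False by auto
  next
    case True
    have s: "{d\<in>?T. fst d = v} = {d\<in>C-{e}. fst d = v}" using fp(4) True by auto
    show ?thesis
    proof (cases "v = fst e")
      case True
      then have "{d\<in>C-{e}. fst d = v} = {}" using cp(4) e by (auto dest: inj_onD) (metis fst_conv inj_onD)
      then have "card {d\<in>?T. fst d = v} = 0" using s by (metis card.empty)
      then show ?thesis using True by simp
    next
      case False
      obtain d where d: "d \<in> C" "fst d = v" using True by auto
      then have "{d\<in>C-{e}. fst d = v} = {d}" using cp(4) False by (auto dest: inj_onD)
      then have "card {d\<in>?T. fst d = v} = 1" using s by (metis is_singletonI is_singleton_altdef)
      then show ?thesis using False by simp
    qed
  qed
  have "?T \<subseteq> E" using fp(2) cp(3) by auto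
  then show ?thesis unfolding spanning_tree_def rooted_forest_def using rV acT deg by auto
qed

definition Zc :: "('a \<times> 'a) set \<Rightarrow> ('a \<times> 'a) set \<Rightarrow> (('a \<times> 'a) set \<times> ('a \<times> 'a) \<times> ('a \<times> 'a) set) set" where
  "Zc F C = (\<lambda>e. tg (F \<union> C - {e}) e) ` C"

lemma proj_Zc: "proj ` Zc F C = C"
  unfolding Zc_def proj_def tg_def by (auto simp: image_image)

lemma inj_proj_Zc: "inj_on proj (Zc F C)"
  unfolding Zc_def proj_def tg_def by (auto simp: inj_on_def)

lemma Zc_sub:
  assumes G: "simple_digraph V E" and C: "simple_cycle fst snd E C"
    and F: "rooted_forest V E (fst`C) F"
  shows "Zc F C \<subseteq> tree_graph_edges V E"
proof
  fix x assume "x \<in> Zc F C"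
  then obtain e where e: "e \<in> C" "x = tg (F \<union> C - {e}) e" unfolding Zc_def by auto
  have "e \<in> E" using cycle_props(3)[OF G C] e by auto
  then show "x \<in> tree_graph_edges V E"
    using tree_of[OF G C F e(1)] e unfolding tree_graph_edges_def tg_def by auto
qed

lemma Zc_cycle:
  assumes G: "simple_digraph V E" and C: "simple_cycle fst snd E C"
    and F: "rooted_forest V E (fst`C) F"
  shows "simple_cycle tg_src tg_tgt (tree_graph_edges V E) (Zc F C)"
proof -
  obtain es where es: "es \<noteq> []" "set es = C" "C \<subseteq> E" "distinct (map fst es)" "cyc es"
    using C unfolding simple_cycle_def cyc_def by auto
  have dist: "distinct es" using es(4) distinct_map by blast
  define h where "h e = tg (F \<union> C - {e}) e" for e
  let ?ts = "map h es"
  have inj1: "inj_on h C" unfolding h_def tg_def inj_on_def by auto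
  have inj2: "inj_on (\<lambda>e. F \<union> C - {e}) C" unfolding inj_on_def by blast
  have eqm: "map fst ?ts = map (\<lambda>e. F \<union> C - {e}) es" unfolding h_def tg_def by simp
  have "distinct (map (\<lambda>e. F \<union> C - {e}) es)" using inj2 dist es(2) by (simp add: distinct_map)
  then have d2: "distinct (map fst ?ts)" using eqm by metis
  have d1: "distinct ?ts" using inj1 dist es(2) by (simp add: distinct_map)
  have st: "set ?ts = Zc F C" unfolding Zc_def h_def using es(2) by simp
  have cy: "snd (snd (?ts!i)) = fst (?ts!((i+1) mod length ?ts))" if i: "i < length ?ts" for i
  proof -
    let ?n = "length es"
    have i': "i < ?n" using i by simp
    have n: "?n > 0" using es(1) by simp
    have ei: "es!i \<in> C" using i' es(2) by auto
    have e'C: "es!((i+1) mod ?n) \<in> C" using n es(2) by auto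
    have fe: "fst (es!((i+1) mod ?n)) = snd (es!i)" using es(5) i' unfolding cyc_def by auto
    have "snd (snd (?ts!i)) = insert (es!i) ((F \<union> C - {es!i}) - {d \<in> F \<union> C - {es!i}. fst d = snd (es!i)})"
      using i' unfolding h_def tg_def by simp
    also have "\<dots> = F \<union> C - {es!((i+1) mod ?n)}" by (rule next_tree[OF G C F ei e'C fe])
    also have "\<dots> = fst (?ts!((i+1) mod length ?ts))" using n unfolding h_def tg_def by simp
    finally show ?thesis .
  qed
  have "Zc F C \<subseteq> tree_graph_edges V E" by (rule Zc_sub[OF G C F])
  then show ?thesis unfolding simple_cycle_def
    using es(1) d1 d2 st cy by (intro exI[of _ ?ts]) auto
qed

lemma path_to_root:
  assumes G: "simple_digraph V E" and T: "spanning_tree V E r a" and v: "v \<in> V"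
  shows "\<exists>ps. set ps \<subseteq> a \<and> distinct (map fst ps) \<and> r \<notin> fst ` set ps \<and>
    (ps = [] \<longrightarrow> v = r) \<and> (ps \<noteq> [] \<longrightarrow> fst (hd ps) = v \<and> snd (last ps) = r) \<and>
    (\<forall>i. Suc i < length ps \<longrightarrow> snd (ps!i) = fst (ps!Suc i)) \<and> (\<forall>x\<in>fst`set ps. (v,x)\<in>a\<^sup>*)"
proof -
  have rf: "rooted_forest V E {r} a" using T unfolding spanning_tree_def by auto
  note fp = forest_props[OF G rf]
  have EV: "E \<subseteq> V \<times> V" using G unfolding simple_digraph_def by auto
  have wf: "wf (a\<inverse>)" using fp(1,3) by (intro finite_acyclic_wf_converse)
  show ?thesis using wf v
  proof (induction v rule: wf_induct_rule)
    case (less v)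
    show ?case
    proof (cases "v = r")
      case True
      then show ?thesis by (intro exI[of _ "[]"]) auto
    next
      case False
      have "card {d\<in>a. fst d = v} = 1" using fp(7) less(2) False by auto
      then obtain d where dd: "{d'\<in>a. fst d' = v} = {d}" using card_1_singletonE by blast
      then have d: "d \<in> a" "fst d = v" by auto
      define u where "u = snd d"
      have du: "(v,u) \<in> a" using d u_def by (metis prod.collapse)
      have uV: "u \<in> V" using du fp(2) EV by auto
      obtain ps where ps: "set ps \<subseteq> a" "distinct (map fst ps)" "r \<notin> fst ` set ps"
        "ps = [] \<longrightarrow> u = r" "ps \<noteq> [] \<longrightarrow> fst (hd ps) = u \<and> snd (last ps) = r"
        "\<forall>i. Suc i < length ps \<longrightarrow> snd (ps!i) = fst (ps!Suc i)" "\<forall>x\<in>fst`set ps. (u,x)\<in>a\<^sup>*"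
        using less(1)[of u] du uV by auto
      have vn: "v \<notin> fst ` set ps"
      proof
        assume "v \<in> fst ` set ps"
        then have "(u,v) \<in> a\<^sup>*" using ps(7) by auto
        then have "(v,v) \<in> a\<^sup>+" using du by (meson rtrancl_into_trancl2)
        then show False using fp(3) unfolding acyclic_def by auto
      qed
      let ?ps = "d # ps"
      have c6: "\<forall>i. Suc i < length ?ps \<longrightarrow> snd (?ps!i) = fst (?ps!Suc i)"
      proof (intro allI impI)
        fix i assume i: "Suc i < length ?ps"
        show "snd (?ps!i) = fst (?ps!Suc i)"
        proof (cases i)
          case 0
          then have "ps \<noteq> []" using i by auto
          then show ?thesis using 0 ps(5) u_def by (simp add: hd_conv_nth)
        next
          case (Suc j)
          then show ?thesis using ps(6) i by auto
        qed
      qed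
      have c5: "snd (last ?ps) = r" using ps(4,5) u_def by auto
      have c7: "\<forall>x\<in>fst`set ?ps. (v,x)\<in>a\<^sup>*" using ps(7) du d(2)
        by (auto intro: converse_rtrancl_into_rtrancl)
      show ?thesis using ps(1,2,3) d vn False c5 c6 c7 by (intro exI[of _ ?ps]) auto
    qed
  qed
qed

lemma cover:
  assumes G: "simple_digraph V E" and x: "x \<in> tree_graph_edges V E"
  shows "\<exists>C F. simple_cycle fst snd E C \<and> rooted_forest V E (fst`C) F \<and> x \<in> Zc F C"
proof -
  obtain a e b r where xd: "x = (a,e,b)" and T: "spanning_tree V E r a" and eE: "e \<in> E"
    and er: "fst e = r" and b: "b = insert e (a - {d \<in> a. fst d = snd e})"
    using x unfolding tree_graph_edges_def by auto
  have rf: "rooted_forest V E {r} a" using T unfolding spanning_tree_def by auto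
  note fp = forest_props[OF G rf]
  have EV: "E \<subseteq> V \<times> V" and nl: "\<forall>v. (v,v) \<notin> E" using G unfolding simple_digraph_def by auto
  define t where "t = snd e"
  have tV: "t \<in> V" using eE EV t_def by auto
  have tr: "t \<noteq> r" using nl eE er t_def by (metis prod.collapse)
  obtain ps where ps: "set ps \<subseteq> a" "distinct (map fst ps)" "r \<notin> fst ` set ps"
        "ps = [] \<longrightarrow> t = r" "ps \<noteq> [] \<longrightarrow> fst (hd ps) = t \<and> snd (last ps) = r"
        "\<forall>i. Suc i < length ps \<longrightarrow> snd (ps!i) = fst (ps!Suc i)" "\<forall>x\<in>fst`set ps. (t,x)\<in>a\<^sup>*"
    using path_to_root[OF G T tV] by blast
  have pne: "ps \<noteq> []" using ps(4) tr by auto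
  let ?es = "e # ps"
  define C where "C = set ?es"
  define F where "F = a - set ps"
  have ea: "e \<notin> a" using fp(4) er by auto
  have eps: "e \<notin> set ps" using ps(3) er by auto
  have dme: "distinct (map fst ?es)" using ps(2,3) er by auto
  have cyc: "\<forall>i<length ?es. snd (?es!i) = fst (?es!((i+1) mod length ?es))"
  proof (intro allI impI)
    fix i assume i: "i < length ?es"
    let ?m = "length ps"
    have m: "?m \<ge> 1" using pne by (cases ps) auto
    show "snd (?es!i) = fst (?es!((i+1) mod length ?es))"
    proof (cases i)
      case 0
      then have "(i+1) mod length ?es = 1" using m by (cases ps) auto
      then show ?thesis using 0 ps(5) pne t_def by (simp add: hd_conv_nth)
    next
      case (Suc j)
      show ?thesis
      proof (cases "Suc j < ?m")
        case True
        then have "(i+1) mod length ?es = Suc (Suc j)" using Suc by simp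
        then show ?thesis using Suc ps(6) True by simp
      next
        case False
        then have jm: "j = ?m - 1" using Suc i by auto
        then have "i + 1 = length ?es" using Suc m by simp
        then have "(i+1) mod length ?es = 0" by simp
        moreover have "snd (ps ! j) = r" using ps(5) pne jm by (simp add: last_conv_nth)
        ultimately show ?thesis using Suc er by simp
      qed
    qed
  qed
  have CE: "C \<subseteq> E" using eE ps(1) fp(2) C_def by auto
  have sc: "simple_cycle fst snd E C" unfolding simple_cycle_def
    using dme cyc CE C_def by (intro exI[of _ ?es]) (auto simp: distinct_map)
  have W: "fst ` C = insert r (fst ` set ps)" using C_def er by auto
  have deg: "card {d\<in>F. fst d = v} = (if v \<in> fst ` C then 0 else 1)" if v: "v \<in> V" for v
  proof (cases "v \<in> fst ` C")
    case True
    have "{d\<in>F. fst d = v} = {}"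
    proof (cases "v = r")
      case True then show ?thesis using fp(4) F_def by auto
    next
      case False
      then have "v \<in> fst ` set ps" using W \<open>v \<in> fst ` C\<close> by auto
      then obtain p where p: "p \<in> set ps" "fst p = v" by auto
      have "card {d\<in>a. fst d = v} = 1" using fp(7) v False by auto
      then obtain d where dd: "{d'\<in>a. fst d' = v} = {d}" using card_1_singletonE by blast
      have "p = d" using dd p ps(1) by auto
      have un: "x = d" if "x \<in> a" "fst x = v" for x using dd that by blast
      show ?thesis
      proof (rule ccontr)
        assume "{d\<in>F. fst d = v} \<noteq> {}"
        then obtain x where "x \<in> F" "fst x = v" by auto
        then show False using un[of x] \<open>p = d\<close> p F_def by auto
      qed
    qed
    then show ?thesis using True by (metis card.empty)
  next
    case False
    then have "{d\<in>F. fst d = v} = {d\<in>a. fst d = v}" using F_def W by (auto intro: rev_image_eqI)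
    moreover have "v \<noteq> r" using False W by auto
    ultimately show ?thesis using fp(7) v False by auto
  qed
  have "fst ` C \<subseteq> V" using CE EV by auto
  moreover have "F \<subseteq> E" using fp(2) F_def by auto
  moreover have "acyclic F" using fp(3) F_def by (auto intro: acyclic_subset)
  ultimately have rfF: "rooted_forest V E (fst`C) F" unfolding rooted_forest_def using deg C_def by auto
  have aeq: "F \<union> C - {e} = a" using ea eps ps(1) F_def C_def by auto
  have "x = tg (F \<union> C - {e}) e" using aeq xd b t_def unfolding tg_def by simp
  then have "x \<in> Zc F C" unfolding Zc_def C_def by auto
  then show ?thesis using sc rfF by blast
qed

lemma recover:
  assumes G: "simple_digraph V E" and C: "simple_cycle fst snd E C"
    and F: "rooted_forest V E (fst`C) F" and e: "e \<in> C" and a: "a = F \<union> C - {e}"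
  shows "C = insert e {d\<in>a. (snd e, fst d) \<in> a\<^sup>*}" "F = a - C"
proof -
  note cp = cycle_props[OF G C] and fp = forest_props[OF G F] and ca = cycle_acyc[OF C e]
  have sub: "C - {e} \<subseteq> a" using a by auto
  have inW: "y \<in> fst ` C" if "(snd e, y) \<in> a\<^sup>*" for y
    using that
  proof (induction rule: rtrancl_induct)
    case base then show ?case using cp(5) e by (metis image_eqI)
  next
    case (step y z)
    then have "(y,z) \<notin> F" using fp(4) by (metis fst_conv)
    then have yz: "(y,z) \<in> C" using step(2) a by auto
    then obtain d' where "d' \<in> C" "fst d' = z" using cp(5) by (metis snd_conv)
    then show ?case by (metis image_eqI)
  qed
  show "C = insert e {d\<in>a. (snd e, fst d) \<in> a\<^sup>*}"
  proof
    show "C \<subseteq> insert e {d\<in>a. (snd e, fst d) \<in> a\<^sup>*}"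
    proof
      fix d assume d: "d \<in> C"
      show "d \<in> insert e {d\<in>a. (snd e, fst d) \<in> a\<^sup>*}"
      proof (cases "d = e")
        case False
        then have "d \<in> a" using d a by auto
        moreover have "(snd e, fst d) \<in> (C-{e})\<^sup>*" using ca(2) d by auto
        then have "(snd e, fst d) \<in> a\<^sup>*" using rtrancl_mono[OF sub] by auto
        ultimately show ?thesis by auto
      qed simp
    qed
  next
    show "insert e {d\<in>a. (snd e, fst d) \<in> a\<^sup>*} \<subseteq> C"
    proof
      fix d assume d: "d \<in> insert e {d\<in>a. (snd e, fst d) \<in> a\<^sup>*}"
      show "d \<in> C"
      proof (cases "d = e")
        case False
        then have "d \<in> a" "fst d \<in> fst ` C" using d inW by auto
        then show ?thesis using fp(4) a by auto
      qed (use e in simp)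
    qed
  qed
  have "d \<notin> C" if "d \<in> F" for d using fp(4) that by (metis image_eqI)
  then show "F = a - C" using a e by auto
qed

lemma Zc_unique:
  assumes G: "simple_digraph V E"
    and C1: "simple_cycle fst snd E C1" and F1: "rooted_forest V E (fst`C1) F1"
    and C2: "simple_cycle fst snd E C2" and F2: "rooted_forest V E (fst`C2) F2"
    and x: "x \<in> Zc F1 C1" "x \<in> Zc F2 C2"
  shows "C1 = C2 \<and> F1 = F2"
proof -
  obtain e1 where e1: "e1 \<in> C1" "x = tg (F1 \<union> C1 - {e1}) e1" using x(1) unfolding Zc_def by auto
  obtain e2 where e2: "e2 \<in> C2" "x = tg (F2 \<union> C2 - {e2}) e2" using x(2) unfolding Zc_def by auto
  have ee: "e1 = e2" and aa: "F1 \<union> C1 - {e1} = F2 \<union> C2 - {e2}" using e1(2) e2(2) unfolding tg_def by auto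
  define a where "a = F1 \<union> C1 - {e1}"
  have r1: "C1 = insert e1 {d\<in>a. (snd e1, fst d) \<in> a\<^sup>*}" "F1 = a - C1"
    using recover[OF G C1 F1 e1(1) a_def] by auto
  have r2: "C2 = insert e1 {d\<in>a. (snd e1, fst d) \<in> a\<^sup>*}" "F2 = a - C2"
    using recover[OF G C2 F2 e2(1)] aa ee a_def by auto
  show ?thesis using r1 r2 by auto
qed

theorem mainTheorem4:
  fixes V :: "'a set" and E :: "('a \<times> 'a) set"
  assumes "simple_digraph V E"
  shows "\<exists>P. \<Union>P = tree_graph_edges V E \<and> pairwise disjnt P \<and>
     (\<forall>Z\<in>P. simple_cycle tg_src tg_tgt (tree_graph_edges V E) Z \<and> inj_on proj Z \<and>
              simple_cycle fst snd E (proj ` Z)) \<and>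
     (\<forall>C. simple_cycle fst snd E C \<longrightarrow>
          card {Z\<in>P. proj ` Z = C} = card {F. rooted_forest V E (fst ` C) F})"
proof -
  note G = assms
  define P where "P = {Zc F C | C F. simple_cycle fst snd E C \<and> rooted_forest V E (fst`C) F}"
  have u: "\<Union>P = tree_graph_edges V E"
  proof
    show "\<Union>P \<subseteq> tree_graph_edges V E" unfolding P_def using Zc_sub[OF G] by blast
    show "tree_graph_edges V E \<subseteq> \<Union>P" unfolding P_def using cover[OF G] by blast
  qed
  have d: "pairwise disjnt P"
  proof (rule pairwiseI)
    fix Z1 Z2 assume z: "Z1 \<in> P" "Z2 \<in> P" "Z1 \<noteq> Z2"
    obtain C1 F1 where c1: "Z1 = Zc F1 C1" "simple_cycle fst snd E C1" "rooted_forest V E (fst`C1) F1"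
      using z(1) unfolding P_def by auto
    obtain C2 F2 where c2: "Z2 = Zc F2 C2" "simple_cycle fst snd E C2" "rooted_forest V E (fst`C2) F2"
      using z(2) unfolding P_def by auto
    show "disjnt Z1 Z2" unfolding disjnt_def
    proof (rule ccontr)
      assume "Z1 \<inter> Z2 \<noteq> {}"
      then obtain x where "x \<in> Zc F1 C1" "x \<in> Zc F2 C2" using c1 c2 by auto
      then have "C1 = C2 \<and> F1 = F2" using Zc_unique[OF G c1(2,3) c2(2,3)] by blast
      then show False using z(3) c1 c2 by simp
    qed
  qed
  have c: "\<forall>Z\<in>P. simple_cycle tg_src tg_tgt (tree_graph_edges V E) Z \<and> inj_on proj Z \<and>
              simple_cycle fst snd E (proj ` Z)"
    unfolding P_def using Zc_cycle[OF G] inj_proj_Zc by (auto simp: proj_Zc)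
  have n: "card {Z\<in>P. proj ` Z = C} = card {F. rooted_forest V E (fst ` C) F}"
    if C: "simple_cycle fst snd E C" for C
  proof -
    have eq: "{Z\<in>P. proj ` Z = C} = (\<lambda>F. Zc F C) ` {F. rooted_forest V E (fst ` C) F}"
      unfolding P_def using proj_Zc C by auto
    obtain e where e: "e \<in> C" using cycle_props(2)[OF G C] by auto
    have "inj_on (\<lambda>F. Zc F C) {F. rooted_forest V E (fst ` C) F}"
    proof (rule inj_onI)
      fix F1 F2 assume f: "F1 \<in> {F. rooted_forest V E (fst ` C) F}" "F2 \<in> {F. rooted_forest V E (fst ` C) F}"
        and z: "Zc F1 C = Zc F2 C"
      have "tg (F1 \<union> C - {e}) e \<in> Zc F1 C" unfolding Zc_def using e by auto
      then show "F1 = F2" using Zc_unique[OF G C _ C, of F1 F2] f z by auto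
    qed
    then show ?thesis using eq by (simp add: card_image)
  qed
  show ?thesis using u d c n by blast
qed

end
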